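(* There is an absolute constant $c>0$ such that the following holds. Let $y\ge2$ and let $n$ be a squarefree integer with $P^+(n)\ge y$; write $n=ab$ with $a=n_y$ and $b=n/n_y$. Then $$\Delta(n)\ge c\,\frac{\tau(a)}{\log(ay)}\,D_y(b).$$
   Context: $\tau(n)$ is the number of divisors; $P^+(n)$ the largest prime factor of $n$ ($P^+(1)=1$); $n_y:=\prod_{p\mid n,\,p<y}p$. $\Delta(n):=\max_{u\in\mathbb R}|\{d\mid n: e^u<d\le e^{u+1}\}|$. For $n\ge1$ and real $\vartheta$, $\tau(n,\vartheta):=\sum_{d\mid n}d^{i\vartheta}$, and $$D_y(b):=\int_0^1\frac{|\tau(b,\vartheta/\log y)|^2}{\tau(b)}\,d\vartheta.$$ *)

theory Defs
  imports "HOL-Analysis.Analysis" "HOL-Computational_Algebra.Squarefree"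
begin

definition ndiv :: "nat \<Rightarrow> nat" where
  "ndiv n = card {d. d dvd n}"

definition Pplus :: "nat \<Rightarrow> nat" where
  "Pplus n = (if prime_factors n = {} then 1 else Max (prime_factors n))"

definition nsmooth :: "nat \<Rightarrow> real \<Rightarrow> nat" where
  "nsmooth n y = (\<Prod>p\<in>{p. prime p \<and> p dvd n \<and> real p < y}. p)"

text \<open>Hooley's Delta function (the max over u is attained: values lie in a finite set).\<close>
definition hooley_Delta :: "nat \<Rightarrow> nat" where
  "hooley_Delta n = Max (range (\<lambda>u::real. card {d. d dvd n \<and> exp u < real d \<and> real d \<le> exp (u + 1)}))"

definition tau_twist :: "nat \<Rightarrow> real \<Rightarrow> complex" where
  "tau_twist n \<theta> = (\<Sum>d\<in>{d. d dvd n}. (of_nat d :: complex) powr (\<i> * of_real \<theta>))"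

definition D_y :: "real \<Rightarrow> nat \<Rightarrow> real" where
  "D_y y b = integral {0..1} (\<lambda>\<theta>. (cmod (tau_twist b (\<theta> / ln y)))\<^sup>2 / real (ndiv b))"

end

theory Submission imports Defs begin

lemma twist_cis:
  assumes "n > 0"
  shows "tau_twist n t = (\<Sum>d\<in>{d. d dvd n}. cis (t * ln (real d)))"
  unfolding tau_twist_def
proof (rule sum.cong[OF refl])
  fix d assume "d \<in> {d. d dvd n}"
  then have d: "d > 0" using assms by (auto intro: Nat.gr0I)
  have "(of_nat d :: complex) = of_real (real d)" by simp
  then have "(of_nat d :: complex) powr (\<i> * of_real t) = exp ((\<i> * of_real t) * of_real (ln (real d)))"
    using d by (simp add: powr_def Ln_of_real)
  also have "\<dots> = cis (t * ln (real d))" by (simp add: cis_conv_exp mult.assoc)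
  finally show "(of_nat d :: complex) powr (\<i> * of_real t) = cis (t * ln (real d))" .
qed

lemma norm_sum_cis_sq:
  fixes f :: "'a \<Rightarrow> real"
  shows "(cmod (\<Sum>d\<in>S. cis (f d)))\<^sup>2 = (\<Sum>d\<in>S. \<Sum>e\<in>S. cos (f d - f e))"
proof -
  have "complex_of_real ((cmod (\<Sum>d\<in>S. cis (f d)))\<^sup>2) = (\<Sum>d\<in>S. cis (f d)) * cnj (\<Sum>d\<in>S. cis (f d))"
    by (rule complex_norm_square)
  also have "\<dots> = (\<Sum>d\<in>S. \<Sum>e\<in>S. cis (f d - f e))"
    by (simp add: sum_product cis_cnj cis_mult)
  finally have "(cmod (\<Sum>d\<in>S. cis (f d)))\<^sup>2 = Re (\<Sum>d\<in>S. \<Sum>e\<in>S. cis (f d - f e))"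
    by (metis Re_complex_of_real)
  also have "\<dots> = (\<Sum>d\<in>S. \<Sum>e\<in>S. cos (f d - f e))" by (simp add: Re_sum)
  finally show ?thesis .
qed

definition Kf :: "real \<Rightarrow> real" where
  "Kf s = (if s = 0 then 1 else (1 - cos (2 * s)) / (2 * (s^2)))"

lemma Kf_integral: "((\<lambda>t. (1 - t/2) * cos (t * s)) has_integral Kf s) {0..2}"
proof (cases "s = 0")
  case True
  have "((\<lambda>t::real. (1 - t/2)) has_integral ((\<lambda>t. t - t\<^sup>2/4) 2 - (\<lambda>t. t - t\<^sup>2/4) 0)) {0..2}"
    apply (rule fundamental_theorem_of_calculus)
     apply simp
    apply (rule has_real_derivative_iff_has_vector_derivative[THEN iffD1])
    apply (auto intro!: derivative_eq_intros)
    done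
  then show ?thesis using True by (simp add: Kf_def)
next
  case False
  define F where "F t = (1 - t/2) * sin (t * s) / s - cos (t * s) / (2 * (s^2))" for t
  have der: "(F has_real_derivative (1 - x/2) * cos (x * s)) (at x)" for x
    unfolding F_def
    using False
    apply (auto intro!: derivative_eq_intros)
    apply (simp add: field_simps power2_eq_square)
    apply (simp add: eval_nat_numeral)
    done
  have "((\<lambda>t. (1 - t/2) * cos (t * s)) has_integral (F 2 - F 0)) {0..2}"
    apply (rule fundamental_theorem_of_calculus)
     apply simp
    apply (rule has_real_derivative_iff_has_vector_derivative[THEN iffD1])
    using der has_field_derivative_at_within by blast
  moreover have "F 2 - F 0 = Kf s" using False
    by (simp add: F_def Kf_def field_simps power2_eq_square)
  ultimately show ?thesis by simp
qed

lemma Kf_alt: "s \<noteq> 0 \<Longrightarrow> Kf s = (sin s)^2 / (s^2)"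
  by (simp add: Kf_def cos_double_sin)

lemma Kf_le1: "Kf s \<le> 1"
proof (cases "s = 0")
  case False
  have "(sin s)^2 \<le> (s^2)"
    using abs_sin_x_le_abs_x[of s] by (metis abs_ge_zero power2_abs power_mono)
  then show ?thesis using False by (simp add: Kf_alt)
qed (simp add: Kf_def)

lemma Kf_le_inv: "s \<noteq> 0 \<Longrightarrow> Kf s \<le> 1 / (s^2)"
proof -
  assume s: "s \<noteq> 0"
  have "(sin s)^2 \<le> 1" by (simp add: abs_sin_le_one abs_square_le_1)
  then show ?thesis using s by (simp add: Kf_alt divide_right_mono)
qed

lemma integral_bound:
  fixes x :: "'a \<Rightarrow> real"
  assumes S: "finite S"
  shows "integral {0..1} (\<lambda>t. \<Sum>d\<in>S. \<Sum>e\<in>S. cos (t * (x d - x e))) \<le> 2 * (\<Sum>d\<in>S. \<Sum>e\<in>S. Kf (x d - x e))"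
proof -
  define g where "g = (\<lambda>t. \<Sum>d\<in>S. \<Sum>e\<in>S. cos (t * (x d - x e)))"
  define h where "h = (\<lambda>t. (1 - t/2) * g t)"
  have gnn: "g t \<ge> 0" for t
  proof -
    have "g t = (cmod (\<Sum>d\<in>S. cis (t * x d)))\<^sup>2"
      unfolding norm_sum_cis_sq g_def by (simp add: right_diff_distrib)
    then show ?thesis by simp
  qed
  have cg: "continuous_on A g" for A unfolding g_def by (intro continuous_intros)
  have ch: "continuous_on A h" for A unfolding h_def using cg by (auto intro!: continuous_intros)
  have hint: "(h has_integral (\<Sum>d\<in>S. \<Sum>e\<in>S. Kf (x d - x e))) {0..2}"
  proof -
    have "((\<lambda>t. \<Sum>d\<in>S. \<Sum>e\<in>S. (1 - t/2) * cos (t * (x d - x e))) has_integral (\<Sum>d\<in>S. \<Sum>e\<in>S. Kf (x d - x e))) {0..2}"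
      by (intro has_integral_sum S Kf_integral)
    moreover have "(\<lambda>t. \<Sum>d\<in>S. \<Sum>e\<in>S. (1 - t/2) * cos (t * (x d - x e))) = h"
      unfolding h_def g_def by (simp add: sum_distrib_left)
    ultimately show ?thesis by simp
  qed
  have "integral {0..1} g \<le> integral {0..1} (\<lambda>t. 2 * h t)"
    apply (rule integral_le)
      apply (rule integrable_continuous_interval, rule cg)
     apply (rule integrable_continuous_interval, intro continuous_intros ch)
  proof -
    fix t :: real assume "t \<in> {0..1}"
    then have "1 * g t \<le> (2 - t) * g t" by (intro mult_right_mono gnn) auto
    then show "g t \<le> 2 * h t" unfolding h_def by (simp add: algebra_simps)
  qed
  also have "\<dots> = 2 * integral {0..1} h" by simp
  also have "integral {0..1} h \<le> integral {0..2} h"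
  proof -
    have "integral {0..1} h + integral {1..2} h = integral {0..2} h"
      using Henstock_Kurzweil_Integration.integral_combine[of 0 1 2 h] integrable_continuous_interval[OF ch] by simp
    moreover have "integral {1..2} h \<ge> 0"
      by (rule integral_nonneg[OF integrable_continuous_interval[OF ch]]) (auto simp: h_def gnn)
    ultimately show ?thesis by linarith
  qed
  also have "integral {0..2} h = (\<Sum>d\<in>S. \<Sum>e\<in>S. Kf (x d - x e))"
    using hint by (rule integral_unique)
  finally show ?thesis unfolding g_def by simp
qed

lemma ln_less_iff_exp: "(x::real) > 0 \<Longrightarrow> (u < ln x) = (exp u < x)"
  by (metis exp_less_cancel_iff exp_ln)
lemma ln_le_iff_exp: "(x::real) > 0 \<Longrightarrow> (ln x \<le> v) = (x \<le> exp v)"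
  by (metis exp_le_cancel_iff exp_ln)

lemma delta_unit:
  assumes n: "n > 0"
  shows "card {m. m dvd n \<and> u < ln (real m) \<and> ln (real m) \<le> u + 1} \<le> hooley_Delta n"
proof -
  have eq: "{m. m dvd n \<and> u < ln (real m) \<and> ln (real m) \<le> u + 1} =
        {d. d dvd n \<and> exp u < real d \<and> real d \<le> exp (u + 1)}"
  proof (rule Collect_cong)
    fix m
    show "(m dvd n \<and> u < ln (real m) \<and> ln (real m) \<le> u + 1) =
        (m dvd n \<and> exp u < real m \<and> real m \<le> exp (u + 1))"
    proof (cases "m dvd n")
      case True
      then have "real m > 0" using n by (auto intro: Nat.gr0I)
      then show ?thesis by (simp add: ln_less_iff_exp ln_le_iff_exp)
    qed simp
  qed
  have fin: "finite {d. d dvd n}" using n by (simp add: finite_divisors_nat)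
  have "range (\<lambda>u::real. card {d. d dvd n \<and> exp u < real d \<and> real d \<le> exp (u + 1)}) \<subseteq> {..card {d. d dvd n}}"
    using fin by (auto intro!: card_mono)
  then have "finite (range (\<lambda>u::real. card {d. d dvd n \<and> exp u < real d \<and> real d \<le> exp (u + 1)}))"
    using finite_subset by blast
  then show ?thesis unfolding eq hooley_Delta_def by (intro Max_ge) auto
qed

lemma count_interval:
  assumes n: "n > 0" and lam: "lam \<ge> 0"
  shows "real (card {m. m dvd n \<and> al \<le> ln (real m) \<and> ln (real m) \<le> al + lam}) \<le> (lam + 2) * real (hooley_Delta n)"
proof -
  define N where "N = nat \<lceil>lam\<rceil> + 1"
  define A where "A j = {m. m dvd n \<and> al - 1 + real j < ln (real m) \<and> ln (real m) \<le> al - 1 + real j + 1}" for j :: nat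
  have fin: "finite {d. d dvd n}" using n by (simp add: finite_divisors_nat)
  have sub: "{m. m dvd n \<and> al \<le> ln (real m) \<and> ln (real m) \<le> al + lam} \<subseteq> (\<Union>j<N. A j)"
  proof
    fix m assume m: "m \<in> {m. m dvd n \<and> al \<le> ln (real m) \<and> ln (real m) \<le> al + lam}"
    define j where "j = nat \<lceil>ln (real m) - al\<rceil>"
    have rj: "real j = of_int \<lceil>ln (real m) - al\<rceil>" using m by (simp add: j_def)
    have "real j - 1 < ln (real m) - al" "ln (real m) - al \<le> real j"
      using rj by linarith+
    moreover have "j < N" unfolding j_def N_def using m
      by (simp add: nat_le_iff ceiling_mono less_Suc_eq_le nat_mono)
    ultimately have "j \<in> {..<N}" "m \<in> A j" using m unfolding A_def by auto
    then show "m \<in> (\<Union>j<N. A j)" by blast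
  qed
  have "card {m. m dvd n \<and> al \<le> ln (real m) \<and> ln (real m) \<le> al + lam} \<le> card (\<Union>j<N. A j)"
    by (rule card_mono[OF _ sub]) (auto intro: finite_subset[OF _ fin] simp: A_def)
  also have "\<dots> \<le> (\<Sum>j<N. card (A j))" by (rule card_UN_le) simp
  also have "\<dots> \<le> (\<Sum>j<N. hooley_Delta n)"
    by (rule sum_mono) (unfold A_def, rule delta_unit[OF n])
  also have "\<dots> = N * hooley_Delta n" by simp
  finally have "real (card {m. m dvd n \<and> al \<le> ln (real m) \<and> ln (real m) \<le> al + lam}) \<le> real N * real (hooley_Delta n)"
    by (metis of_nat_le_iff of_nat_mult)
  also have "\<dots> \<le> (lam + 2) * real (hooley_Delta n)"
  proof (rule mult_right_mono)
    have "real N = of_int \<lceil>lam\<rceil> + 1" unfolding N_def using lam by simp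
    then show "real N \<le> lam + 2" by linarith
  qed simp
  finally show ?thesis .
qed

lemma count_b:
  assumes n: "n > 0" and ab: "a * b = n" and cop: "coprime a b" and l: "l \<ge> 0"
  shows "real (card {d. d dvd b \<and> al \<le> ln (real d) \<and> ln (real d) \<le> al + l}) * real (ndiv a)
         \<le> (l + ln (real a) + 2) * real (hooley_Delta n)"
proof -
  have a0: "a > 0" and b0: "b > 0" using n ab by auto
  define T where "T = {d. d dvd b \<and> al \<le> ln (real d) \<and> ln (real d) \<le> al + l}"
  define E where "E = {e. e dvd a}"
  have finT: "finite T" unfolding T_def using b0 by (auto intro: finite_subset[OF _ finite_divisors_nat[OF b0]])
  have finE: "finite E" unfolding E_def using finite_divisors_nat[OF a0] .
  have inj: "inj_on (\<lambda>(d,e). d * e) (T \<times> E)"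
  proof (rule inj_onI)
    fix p q assume hp: "p \<in> T \<times> E" "q \<in> T \<times> E" "(\<lambda>(d,e). d * e) p = (\<lambda>(d,e). d * e) q"
    obtain d e d' e' where pq: "p = (d, e)" "q = (d', e')" by fastforce
    have h: "(d, e) \<in> T \<times> E" "(d', e') \<in> T \<times> E" "d * e = d' * e'" using hp pq by auto
    have key: "gcd (d * e) b = d \<and> gcd (d * e) a = e" if "d dvd b" "e dvd a" for d e
    proof
      have "coprime b e" using cop that(2) by (meson coprime_commute coprime_divisors dvd_refl)
      then have "gcd (d * e) b = gcd d b" by (rule gcd_mult_left_right_cancel)
      then show "gcd (d * e) b = d" using that(1) by (simp add: gcd_nat.absorb1)
      have "coprime a d" using cop that(1) by (meson coprime_divisors dvd_refl)
      then have "gcd (d * e) a = gcd e a" by (metis gcd_mult_left_left_cancel)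
      then show "gcd (d * e) a = e" using that(2) by (simp add: gcd_nat.absorb1)
    qed
    from h have "d = d' \<and> e = e'" unfolding T_def E_def using key by (metis (no_types, lifting) mem_Collect_eq mem_Sigma_iff)
    then show "p = q" using pq by simp
  qed
  have sub: "(\<lambda>(d,e). d * e) ` (T \<times> E) \<subseteq> {m. m dvd n \<and> al \<le> ln (real m) \<and> ln (real m) \<le> al + (l + ln (real a))}"
  proof clarify
    fix d e assume d: "d \<in> T" and e: "e \<in> E"
    have d0: "d > 0" using d b0 unfolding T_def by (auto intro: Nat.gr0I)
    have e0: "e > 0" using e a0 unfolding E_def by (auto intro: Nat.gr0I)
    have "e \<le> a" using e a0 unfolding E_def by (simp add: dvd_imp_le)
    then have "ln (real e) \<le> ln (real a)" using e0 by simp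
    moreover have "ln (real e) \<ge> 0" using e0 by simp
    moreover have "ln (real (d * e)) = ln (real d) + ln (real e)" using d0 e0 by (simp add: ln_mult)
    moreover have "d * e dvd n" using d e ab unfolding T_def E_def by (metis mem_Collect_eq mult.commute mult_dvd_mono)
    ultimately show "d * e dvd n \<and> al \<le> ln (real (d * e)) \<and> ln (real (d * e)) \<le> al + (l + ln (real a))"
      using d unfolding T_def by auto
  qed
  have "card T * card E = card ((\<lambda>(d,e). d * e) ` (T \<times> E))"
    by (simp add: card_image[OF inj] card_cartesian_product)
  also have "\<dots> \<le> card {m. m dvd n \<and> al \<le> ln (real m) \<and> ln (real m) \<le> al + (l + ln (real a))}"
    by (rule card_mono[OF _ sub]) (auto intro: finite_subset[OF _ finite_divisors_nat[OF n]])
  finally have "real (card T) * real (card E) \<le> real (card {m. m dvd n \<and> al \<le> ln (real m) \<and> ln (real m) \<le> al + (l + ln (real a))})"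
    by (metis of_nat_le_iff of_nat_mult)
  also have "\<dots> \<le> (l + ln (real a) + 2) * real (hooley_Delta n)"
    by (rule count_interval[OF n]) (use l a0 in simp)
  finally show ?thesis unfolding T_def E_def ndiv_def .
qed

definition psi :: "nat \<Rightarrow> real" where
  "psi k = (if k = 0 then 1 else 1 / (real k)^2)"

lemma psi_nonneg: "psi k \<ge> 0" by (simp add: psi_def)

lemma psi_sum_aux: "(\<Sum>k<N+2. psi k) \<le> 3 - 1 / real (N + 1)"
proof (induction N)
  case 0 then show ?case by (simp add: psi_def eval_nat_numeral)
next
  case (Suc N)
  have "(\<Sum>k<Suc N + 2. psi k) = (\<Sum>k<N+2. psi k) + psi (N + 2)" by simp
  also have "psi (N+2) = 1 / (real N + 2)^2" by (simp add: psi_def)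
  also have "1 / (real N + 2)^2 \<le> 1 / real (N+1) - 1 / real (Suc N + 1)"
  proof -
    have "1 / real (N+1) - 1 / real (Suc N + 1) = 1 / ((real N + 1) * (real N + 2))"
      by (simp add: field_simps)
    moreover have "(real N + 1) * (real N + 2) \<le> (real N + 2)^2" by (simp add: power2_eq_square)
    ultimately show ?thesis by (simp add: frac_le)
  qed
  finally show ?case using Suc.IH by simp
qed

lemma psi_sum_lessThan: "(\<Sum>k<m. psi k) \<le> 3"
proof (cases "m < 2")
  case True
  then have "m = 0 \<or> m = 1" by auto
  then show ?thesis by (auto simp: psi_def)
next
  case False
  then obtain N where "m = N + 2" by (metis add.commute le_Suc_ex not_less)
  then show ?thesis using psi_sum_aux[of N] by (smt (verit) of_nat_0_le_iff divide_nonneg_nonneg)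
qed

lemma psi_sum: "finite F \<Longrightarrow> (\<Sum>k\<in>F. psi k) \<le> 3"
proof -
  assume "finite F"
  then obtain m where "F \<subseteq> {..<m}" using finite_nat_bounded by blast
  then have "(\<Sum>k\<in>F. psi k) \<le> (\<Sum>k<m. psi k)" by (intro sum_mono2) (auto simp: psi_nonneg)
  then show ?thesis using psi_sum_lessThan[of m] by simp
qed


lemma per_d:
  assumes n: "n > 0" and ab: "a * b = n" and cop: "coprime a b" and Ly: "Ly > 0"
  shows "(\<Sum>e\<in>{e. e dvd b}. Kf ((ld - ln (real e)) / Ly))
     \<le> 6 * ((Ly + ln (real a) + 2) * real (hooley_Delta n) / real (ndiv a))"
proof -
  have a0: "a > 0" and b0: "b > 0" using n ab by auto
  define S where "S = {e. e dvd b}"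
  have finS: "finite S" unfolding S_def using finite_divisors_nat[OF b0] .
  have tpos: "real (ndiv a) > 0"
  proof -
    have "1 \<in> {d. d dvd a}" by simp
    then have "card {d. d dvd a} > 0" using finite_divisors_nat[OF a0] by (auto simp: card_gt_0_iff)
    then show ?thesis by (simp add: ndiv_def)
  qed
  define M where "M = (Ly + ln (real a) + 2) * real (hooley_Delta n) / real (ndiv a)"
  define sv where "sv e = (ld - ln (real e)) / Ly" for e :: nat
  define kap where "kap e = nat \<lfloor>\<bar>sv e\<bar>\<rfloor>" for e
  have step1: "Kf (sv e) \<le> psi (kap e)" for e
  proof (cases "kap e = 0")
    case True then show ?thesis by (simp add: psi_def Kf_le1)
  next
    case False
    have "real (kap e) = of_int \<lfloor>\<bar>sv e\<bar>\<rfloor>" unfolding kap_def by simp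
    then have k: "real (kap e) \<le> \<bar>sv e\<bar>" by linarith
    have kp: "real (kap e) > 0" using False by simp
    then have "sv e \<noteq> 0" using k by auto
    then have "Kf (sv e) \<le> 1 / (sv e)^2" by (rule Kf_le_inv)
    also have "\<dots> \<le> 1 / (real (kap e))^2"
    proof (rule divide_left_mono)
      have "(real (kap e))^2 \<le> \<bar>sv e\<bar>^2" using k kp by (intro power_mono) auto
      then show "(real (kap e))^2 \<le> (sv e)^2" by simp
    qed (use kp \<open>sv e \<noteq> 0\<close> in auto)
    finally show ?thesis using False by (simp add: psi_def)
  qed
  have cnt: "real (card {e \<in> S. kap e = k}) \<le> 2 * M" for k
  proof -
    define T1 where "T1 = {e. e dvd b \<and> ld - (real k + 1) * Ly \<le> ln (real e) \<and> ln (real e) \<le> ld - (real k + 1) * Ly + Ly}"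
    define T2 where "T2 = {e. e dvd b \<and> ld + real k * Ly \<le> ln (real e) \<and> ln (real e) \<le> ld + real k * Ly + Ly}"
    have sub: "{e \<in> S. kap e = k} \<subseteq> T1 \<union> T2"
    proof
      fix e assume e: "e \<in> {e \<in> S. kap e = k}"
      have "real (kap e) = of_int \<lfloor>\<bar>sv e\<bar>\<rfloor>" unfolding kap_def by simp
      moreover have "kap e = k" using e by simp
      ultimately have rk: "real k = of_int \<lfloor>\<bar>sv e\<bar>\<rfloor>" by simp
      have k1: "real k \<le> \<bar>sv e\<bar>" "\<bar>sv e\<bar> \<le> real k + 1" using rk by linarith+
      have sl: "sv e * Ly = ld - ln (real e)" unfolding sv_def using Ly by simp
      show "e \<in> T1 \<union> T2"
      proof (cases "sv e \<ge> 0")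
        case True
        then have "real k * Ly \<le> sv e * Ly" "sv e * Ly \<le> (real k + 1) * Ly"
          using k1 Ly by (auto intro: mult_right_mono)
        then have "e \<in> T1" using e sl unfolding T1_def S_def by (auto simp: algebra_simps)
        then show ?thesis by simp
      next
        case False
        then have q: "real k \<le> - sv e" "- sv e \<le> real k + 1" using k1 by auto
        have "real k * Ly \<le> (- sv e) * Ly" using mult_right_mono[OF q(1), of Ly] Ly by simp
        moreover have "(- sv e) * Ly \<le> (real k + 1) * Ly" using mult_right_mono[OF q(2), of Ly] Ly by simp
        ultimately have "e \<in> T2" using e sl unfolding T2_def S_def by (auto simp: algebra_simps)
        then show ?thesis by simp
      qed
    qed
    have fT1: "finite T1" "finite T2" unfolding T1_def T2_def
      by (auto intro: finite_subset[OF _ finite_divisors_nat[OF b0]])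
    have "card {e \<in> S. kap e = k} \<le> card (T1 \<union> T2)" by (rule card_mono) (use fT1 sub in auto)
    also have "\<dots> \<le> card T1 + card T2" by (rule card_Un_le)
    finally have c: "real (card {e \<in> S. kap e = k}) \<le> real (card T1) + real (card T2)"
      by (metis of_nat_add of_nat_le_iff)
    have "real (card T1) * real (ndiv a) \<le> (Ly + ln (real a) + 2) * real (hooley_Delta n)"
      unfolding T1_def by (rule count_b[OF n ab cop]) (use Ly in simp)
    then have "real (card T1) \<le> M" unfolding M_def using tpos by (simp add: field_simps)
    moreover have "real (card T2) * real (ndiv a) \<le> (Ly + ln (real a) + 2) * real (hooley_Delta n)"
      unfolding T2_def by (rule count_b[OF n ab cop]) (use Ly in simp)
    then have "real (card T2) \<le> M" unfolding M_def using tpos by (simp add: field_simps)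
    ultimately show ?thesis using c by simp
  qed
  have Mnn: "M \<ge> 0"
  proof -
    have "ln (real a) \<ge> 0" using a0 by simp
    then show ?thesis unfolding M_def using Ly tpos by simp
  qed
  have "(\<Sum>e\<in>S. Kf (sv e)) \<le> (\<Sum>e\<in>S. psi (kap e))" by (rule sum_mono) (rule step1)
  also have "\<dots> = (\<Sum>k\<in>kap ` S. (\<Sum>e\<in>{e \<in> S. kap e = k}. psi (kap e)))"
    by (rule sum.image_gen[OF finS])
  also have "\<dots> = (\<Sum>k\<in>kap ` S. psi k * real (card {e \<in> S. kap e = k}))"
    by (rule sum.cong[OF refl]) simp
  also have "\<dots> \<le> (\<Sum>k\<in>kap ` S. psi k * (2 * M))"
    by (rule sum_mono) (intro mult_left_mono cnt psi_nonneg)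
  also have "\<dots> = (\<Sum>k\<in>kap ` S. psi k) * (2 * M)" by (simp add: sum_distrib_right)
  also have "\<dots> \<le> 3 * (2 * M)" by (rule mult_right_mono) (use psi_sum finS Mnn in auto)
  finally show ?thesis unfolding S_def sv_def M_def by simp
qed


lemma prod_primes_dvd:
  fixes n :: nat
  assumes "finite P" "\<And>p. p \<in> P \<Longrightarrow> prime p \<and> p dvd n"
  shows "(\<Prod>p\<in>P. p) dvd n"
  using assms
proof (induction P rule: finite_induct)
  case empty then show ?case by simp
next
  case (insert q F)
  have q: "prime q" "q dvd n" using insert.prems by auto
  have "\<not> q dvd (\<Prod>p\<in>F. p)"
  proof
    assume "q dvd (\<Prod>p\<in>F. p)"
    then obtain r where "r \<in> F" "q dvd r" using prime_dvd_prod_iff[OF insert.hyps(1) q(1)] by auto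
    moreover have "prime r" using insert.prems \<open>r \<in> F\<close> by auto
    ultimately have "q = r" using q(1) by (simp add: primes_dvd_imp_eq)
    then show False using \<open>r \<in> F\<close> insert.hyps(2) by simp
  qed
  then have "coprime q (\<Prod>p\<in>F. p)" using q(1) by (simp add: prime_imp_coprime)
  moreover have "(\<Prod>p\<in>F. p) dvd n" using insert by auto
  ultimately show ?case using insert.hyps q(2) by (simp add: divides_mult)
qed

lemma smooth_part:
  fixes n :: nat
  assumes sq: "squarefree n"
  shows "nsmooth n y dvd n" "coprime (nsmooth n y) (n div nsmooth n y)"
proof -
  have n0: "n > 0" using sq not_squarefree_0 by (auto intro: Nat.gr0I)
  have fin: "finite {p. prime p \<and> p dvd n \<and> real p < y}"
    by (rule finite_subset[OF _ finite_divisors_nat[OF n0]]) auto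
  show ad: "nsmooth n y dvd n" unfolding nsmooth_def by (rule prod_primes_dvd[OF fin]) auto
  define a where "a = nsmooth n y"
  define b where "b = n div a"
  have ab: "a * b = n" using ad unfolding a_def b_def by simp
  show "coprime (nsmooth n y) (n div nsmooth n y)"
  proof (rule ccontr)
    assume "\<not> coprime (nsmooth n y) (n div nsmooth n y)"
    then have "gcd a b \<noteq> 1" unfolding a_def b_def by (simp add: coprime_iff_gcd_eq_1)
    then obtain p where p: "prime p" "p dvd gcd a b" using prime_factor_nat by blast
    then have "p^2 dvd a * b" by (simp add: power2_eq_square mult_dvd_mono)
    then have "p dvd 1" using sq ab squarefreeD by metis
    then show False using p(1) by simp
  qed
qed

theorem lemma3p2:
  "\<exists>c::real. c > 0 \<and>
     (\<forall>(y::real) (n::nat). y \<ge> 2 \<longrightarrow> squarefree n \<longrightarrow> real (Pplus n) \<ge> y \<longrightarrow>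
        (let a = nsmooth n y; b = n div nsmooth n y in
          real (hooley_Delta n) \<ge> c * real (ndiv a) / ln (real a * y) * D_y y b))"
proof (intro exI[of _ "1/48"] conjI allI impI)
  fix y :: real and n :: nat
  assume y: "y \<ge> 2" and sq: "squarefree n" and "real (Pplus n) \<ge> y"
  have n0: "n > 0" using sq not_squarefree_0 by (auto intro: Nat.gr0I)
  define a where "a = nsmooth n y"
  define b where "b = n div a"
  have ad: "a dvd n" and cop: "coprime a b" using smooth_part[OF sq] unfolding a_def b_def by auto
  have ab: "a * b = n" using ad unfolding b_def by simp
  have a0: "a > 0" and b0: "b > 0" using ab n0 by auto
  define Ly where "Ly = ln y"
  have Ly: "Ly \<ge> 2/3" unfolding Ly_def using ln2_ge_two_thirds y
    by (smt (verit) ln_le_cancel_iff)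
  then have Ly0: "Ly > 0" by simp
  define S where "S = {e. e dvd b}"
  have finS: "finite S" unfolding S_def using finite_divisors_nat[OF b0] .
  define x where "x e = ln (real e) / Ly" for e :: nat
  define g where "g = (\<lambda>t. \<Sum>d\<in>S. \<Sum>e\<in>S. cos (t * (x d - x e)))"
  define tb where "tb = real (ndiv b)"
  define ta where "ta = real (ndiv a)"
  define De where "De = real (hooley_Delta n)"
  define M where "M = (Ly + ln (real a) + 2) * De / ta"
  have tapos: "ta > 0"
  proof -
    have "1 \<in> {d. d dvd a}" by simp
    then have "card {d. d dvd a} > 0" using finite_divisors_nat[OF a0] by (auto simp: card_gt_0_iff)
    then show ?thesis by (simp add: ndiv_def ta_def)
  qed
  have tbpos: "tb > 0"
  proof -
    have "1 \<in> {d. d dvd b}" by simp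
    then have "card {d. d dvd b} > 0" using finite_divisors_nat[OF b0] by (auto simp: card_gt_0_iff)
    then show ?thesis by (simp add: ndiv_def tb_def)
  qed
  have Dy: "D_y y b = integral {0..1} g / tb"
  proof -
    have "(\<lambda>t. (cmod (tau_twist b (t / ln y)))\<^sup>2 / real (ndiv b)) = (\<lambda>t. g t / tb)"
    proof
      fix t
      have "(cmod (tau_twist b (t / ln y)))\<^sup>2 = (cmod (\<Sum>d\<in>S. cis (t / Ly * ln (real d))))\<^sup>2"
        unfolding twist_cis[OF b0] S_def Ly_def by simp
      also have "\<dots> = g t" unfolding norm_sum_cis_sq g_def x_def
        by (intro sum.cong refl arg_cong[where f=cos]) (simp add: field_simps)
      finally show "(cmod (tau_twist b (t / ln y)))\<^sup>2 / real (ndiv b) = g t / tb" by (simp add: tb_def)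
    qed
    then show ?thesis unfolding D_y_def by (simp add: integral_divide)
  qed
  have perd: "(\<Sum>e\<in>S. Kf (x d - x e)) \<le> 6 * M" for d
  proof -
    have "(\<Sum>e\<in>S. Kf (x d - x e)) = (\<Sum>e\<in>{e. e dvd b}. Kf ((ln (real d) - ln (real e)) / Ly))"
      unfolding S_def x_def by (simp add: diff_divide_distrib)
    also have "\<dots> \<le> 6 * M" unfolding M_def De_def ta_def by (rule per_d[OF n0 ab cop Ly0])
    finally show ?thesis .
  qed
  have "integral {0..1} g \<le> 2 * (\<Sum>d\<in>S. \<Sum>e\<in>S. Kf (x d - x e))"
    unfolding g_def by (rule integral_bound[OF finS])
  also have "(\<Sum>d\<in>S. \<Sum>e\<in>S. Kf (x d - x e)) \<le> (\<Sum>d\<in>S. 6 * M)" by (rule sum_mono) (rule perd)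
  also have "(\<Sum>d\<in>S. 6 * M) = tb * (6 * M)" by (simp add: tb_def S_def ndiv_def)
  finally have "integral {0..1} g \<le> 2 * (tb * (6 * M))" by simp
  then have DyM: "D_y y b \<le> 12 * M" unfolding Dy using tbpos by (simp add: field_simps)
  define L where "L = ln (real a * y)"
  have lna: "ln (real a) \<ge> 0" using a0 by simp
  have L: "L = ln (real a) + Ly" unfolding L_def Ly_def using a0 y by (simp add: ln_mult)
  have Lpos: "L > 0" using L lna Ly0 by simp
  have "1/48 * ta / L * D_y y b \<le> 1/48 * ta / L * (12 * M)"
    by (rule mult_left_mono[OF DyM]) (use tapos Lpos in simp)
  also have "\<dots> = (Ly + ln (real a) + 2) * De / (4 * L)" unfolding M_def using tapos Lpos by (simp add: field_simps)
  also have "\<dots> \<le> De"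
  proof -
    have De0: "De \<ge> 0" unfolding De_def by simp
    have "(Ly + ln (real a) + 2) * De \<le> (4 * L) * De" using L lna Ly De0 by (intro mult_right_mono) auto
    then show ?thesis using Lpos by (simp add: divide_le_eq mult.commute)
  qed
  finally show "let a = nsmooth n y; b = n div nsmooth n y in
          real (hooley_Delta n) \<ge> 1/48 * real (ndiv a) / ln (real a * y) * D_y y b"
    unfolding Let_def a_def[symmetric] b_def[symmetric] ta_def[symmetric] L_def[symmetric] De_def[symmetric] by simp
qed (simp)

end
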